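(* Let $\boldsymbol{N}\in\mathbb{R}^3$ with $\|\boldsymbol{N}\|=1$ and $\boldsymbol{G}^{\mathrm{ti}}=\boldsymbol{N}\otimes\boldsymbol{N}$. For $\boldsymbol{F}\in\mathrm{GL}^+(3)$ let $\boldsymbol{H}=\operatorname{cof}\boldsymbol{F}=(\det\boldsymbol{F})\boldsymbol{F}^{-T}$. Then the functions $$I_4^{\mathrm{ti}}(\boldsymbol{F})=\|\boldsymbol{F}\|^2-\|\boldsymbol{F}\boldsymbol{G}^{\mathrm{ti}}\|^2,\qquad I_5^{\mathrm{ti}}(\boldsymbol{F})=\|\boldsymbol{H}\|^2-\|\boldsymbol{H}\boldsymbol{G}^{\mathrm{ti}}\|^2$$ are twice continuously differentiable and polyconvex.
   Context: $\|\cdot\|$ is the Frobenius norm and $\mathrm{GL}^+(3)$ is the set of real $3\times3$ matrices with positive determinant. A function $W$ of $\boldsymbol{F}$ is polyconvex if it admits a representation $W(\boldsymbol{F})=\mathcal{P}(\boldsymbol{F},\operatorname{cof}\boldsymbol{F},\det\boldsymbol{F})$ with $\mathcal{P}$ convex in its arguments. *)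

theory Defs
  imports "HOL-Analysis.Analysis"
begin

text \<open>GL+(3): real 3x3 matrices with positive determinant.
  Note: the norm on real^3^3 is the Frobenius norm.\<close>
definition GLp3 :: "(real^3^3) set" where
  "GLp3 = {F. det F > 0}"

definition cof :: "real^3^3 \<Rightarrow> real^3^3" where
  "cof F = det F *\<^sub>R transpose (matrix_inv F)"

definition dyad :: "real^3 \<Rightarrow> real^3 \<Rightarrow> real^3^3" where
  "dyad a b = (\<chi> i j. a $ i * b $ j)"

definition C2_on :: "('a::real_normed_vector \<Rightarrow> real) \<Rightarrow> 'a set \<Rightarrow> bool" where
  "C2_on f S \<longleftrightarrow> (\<exists>(f' :: 'a \<Rightarrow> ('a \<Rightarrow>\<^sub>L real)) (f'' :: 'a \<Rightarrow> ('a \<Rightarrow>\<^sub>L ('a \<Rightarrow>\<^sub>L real))).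
      (\<forall>x\<in>S. (f has_derivative blinfun_apply (f' x)) (at x)) \<and>
      (\<forall>x\<in>S. (f' has_derivative blinfun_apply (f'' x)) (at x)) \<and>
      continuous_on S f'')"

definition polyconvex :: "(real^3^3 \<Rightarrow> real) \<Rightarrow> bool" where
  "polyconvex W \<longleftrightarrow> (\<exists>P :: (real^3^3) \<times> (real^3^3) \<times> real \<Rightarrow> real.
      convex_on (UNIV \<times> UNIV \<times> {0<..}) P \<and>
      (\<forall>F\<in>GLp3. W F = P (F, cof F, det F)))"

end

theory Submission
  imports Defs
begin

inductive polyf :: "('a::euclidean_space \<Rightarrow> real) \<Rightarrow> bool" where
  pconst: "polyf (\<lambda>x. c)"
| plin: "polyf (\<lambda>x. x \<bullet> b)"
| padd: "polyf f \<Longrightarrow> polyf g \<Longrightarrow> polyf (\<lambda>x. f x + g x)"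
| pmul: "polyf f \<Longrightarrow> polyf g \<Longrightarrow> polyf (\<lambda>x. f x * g x)"

lemma polyf_cont: "polyf f \<Longrightarrow> continuous_on UNIV f"
  by (induction rule: polyf.induct) (auto intro!: continuous_intros)

lemma polyf_deriv:
  assumes "polyf (f :: 'a::euclidean_space \<Rightarrow> real)"
  shows "\<exists>g. (\<forall>b. polyf (g b)) \<and>
     (\<forall>x. (f has_derivative (\<lambda>h. \<Sum>b\<in>Basis. (h \<bullet> b) * g b x)) (at x))"
  using assms
proof (induction rule: polyf.induct)
  case (pconst c)
  show ?case
    by (rule exI[of _ "\<lambda>b x. 0"]) (auto intro: polyf.intros)
next
  case (plin b)
  show ?case
  proof (rule exI[of _ "\<lambda>c x. b \<bullet> c"], intro conjI allI)
    fix c show "polyf (\<lambda>x::'a. b \<bullet> c)" by (rule polyf.intros)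
  next
    fix x :: 'a
    have "(\<lambda>h. h \<bullet> b) = (\<lambda>h. \<Sum>c\<in>Basis. (h \<bullet> c) * (b \<bullet> c))"
      by (rule ext) (rule euclidean_inner)
    moreover have "((\<lambda>x. x \<bullet> b) has_derivative (\<lambda>h. h \<bullet> b)) (at x)"
      by (auto intro!: derivative_eq_intros)
    ultimately show "((\<lambda>x. x \<bullet> b) has_derivative (\<lambda>h. \<Sum>c\<in>Basis. (h \<bullet> c) * (b \<bullet> c))) (at x)"
      by simp
  qed
next
  case (padd f g)
  then obtain gf gg where gf: "\<forall>b. polyf (gf b)" "\<forall>x. (f has_derivative (\<lambda>h. \<Sum>b\<in>Basis. (h \<bullet> b) * gf b x)) (at x)"
    and gg: "\<forall>b. polyf (gg b)" "\<forall>x. (g has_derivative (\<lambda>h. \<Sum>b\<in>Basis. (h \<bullet> b) * gg b x)) (at x)"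
    by blast
  show ?case
  proof (rule exI[of _ "\<lambda>b x. gf b x + gg b x"], intro conjI allI)
    fix b show "polyf (\<lambda>x. gf b x + gg b x)" using gf gg by (auto intro: polyf.intros)
  next
    fix x
    show "((\<lambda>x. f x + g x) has_derivative (\<lambda>h. \<Sum>b\<in>Basis. (h \<bullet> b) * (gf b x + gg b x))) (at x)"
      by (rule has_derivative_eq_rhs[OF has_derivative_add[OF gf(2)[rule_format] gg(2)[rule_format]]])
        (simp add: algebra_simps sum.distrib)
  qed
next
  case (pmul f g)
  then obtain gf gg where gf: "\<forall>b. polyf (gf b)" "\<forall>x. (f has_derivative (\<lambda>h. \<Sum>b\<in>Basis. (h \<bullet> b) * gf b x)) (at x)"
    and gg: "\<forall>b. polyf (gg b)" "\<forall>x. (g has_derivative (\<lambda>h. \<Sum>b\<in>Basis. (h \<bullet> b) * gg b x)) (at x)"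
    by blast
  show ?case
  proof (rule exI[of _ "\<lambda>b x. f x * gg b x + gf b x * g x"], intro conjI allI)
    fix b show "polyf (\<lambda>x. f x * gg b x + gf b x * g x)" by (rule polyf.padd; rule polyf.pmul) (simp_all add: pmul.hyps gf(1) gg(1))
  next
    fix x
    show "((\<lambda>x. f x * g x) has_derivative (\<lambda>h. \<Sum>b\<in>Basis. (h \<bullet> b) * (f x * gg b x + gf b x * g x))) (at x)"
      by (rule has_derivative_eq_rhs[OF has_derivative_mult[OF gf(2)[rule_format] gg(2)[rule_format]]])
        (simp add: algebra_simps sum.distrib sum_distrib_left sum_distrib_right)
  qed
qed

definition Cb :: "'a::euclidean_space \<Rightarrow> 'a \<Rightarrow> ('a \<Rightarrow>\<^sub>L ('a \<Rightarrow>\<^sub>L real))" where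
  "Cb b c = Blinfun (\<lambda>h. (h \<bullet> c) *\<^sub>R blinfun_inner_left b)"

lemma Cb_apply: "blinfun_apply (Cb b c) h = (h \<bullet> c) *\<^sub>R blinfun_inner_left b"
proof -
  have "bounded_linear (\<lambda>h. (h \<bullet> c) *\<^sub>R blinfun_inner_left b)"
    by (intro bounded_linear_compose[OF bounded_linear_scaleR_left] bounded_linear_inner_left)
  then show ?thesis unfolding Cb_def by (simp add: bounded_linear_Blinfun_apply)
qed

lemma polyf_C2:
  assumes "polyf (f :: 'a::euclidean_space \<Rightarrow> real)"
  shows "\<exists>(f' :: 'a \<Rightarrow> ('a \<Rightarrow>\<^sub>L real)) (f'' :: 'a \<Rightarrow> ('a \<Rightarrow>\<^sub>L ('a \<Rightarrow>\<^sub>L real))).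
      (\<forall>x. (f has_derivative blinfun_apply (f' x)) (at x)) \<and>
      (\<forall>x. (f' has_derivative blinfun_apply (f'' x)) (at x)) \<and>
      continuous_on UNIV f''"
proof -
  obtain g where g: "\<forall>b. polyf (g b)" "\<forall>x. (f has_derivative (\<lambda>h. \<Sum>b\<in>Basis. (h \<bullet> b) * g b x)) (at x)"
    using polyf_deriv[OF assms] by blast
  have "\<forall>b. \<exists>k. (\<forall>c. polyf (k c)) \<and> (\<forall>x. (g b has_derivative (\<lambda>h. \<Sum>c\<in>Basis. (h \<bullet> c) * k c x)) (at x))"
    using g(1) polyf_deriv by blast
  then obtain k where k: "\<And>b c. polyf (k b c)"
    "\<And>b x. (g b has_derivative (\<lambda>h. \<Sum>c\<in>Basis. (h \<bullet> c) * k b c x)) (at x)"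
    by metis
  define f' where "f' x = (\<Sum>b\<in>Basis. g b x *\<^sub>R blinfun_inner_left b)" for x
  define f'' where "f'' x = (\<Sum>b\<in>Basis. \<Sum>c\<in>Basis. k b c x *\<^sub>R Cb b c)" for x
  have f'a: "blinfun_apply (f' x) = (\<lambda>h. \<Sum>b\<in>Basis. (h \<bullet> b) * g b x)" for x
    by (rule ext) (simp add: f'_def blinfun.sum_left blinfun.scaleR_left mult.commute)
  have f''a: "blinfun_apply (f'' x) = (\<lambda>h. \<Sum>b\<in>Basis. (\<Sum>c\<in>Basis. (h \<bullet> c) * k b c x) *\<^sub>R blinfun_inner_left b)" for x
    by (rule ext) (simp add: f''_def blinfun.sum_left blinfun.scaleR_left Cb_apply scaleR_sum_left mult.commute)
  have d1: "(f has_derivative blinfun_apply (f' x)) (at x)" for x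
    unfolding f'a using g(2) by blast
  have d2: "(f' has_derivative blinfun_apply (f'' x)) (at x)" for x
    unfolding f''a f'_def
    by (intro has_derivative_sum has_derivative_scaleR_left k(2))
  have c: "continuous_on UNIV f''"
    unfolding f''_def
    by (intro continuous_on_sum continuous_on_scaleR continuous_on_const polyf_cont k)
  show ?thesis using d1 d2 c by blast
qed


lemma t3: "(1::3)+1 = 2" "(1::3)+2 = 3" "(2::3)+1=3" "(2::3)+2 = 1" "(3::3)+1=1" "(3::3)+2=2"
   "(4::3) = 1" "(5::3) = 2"
  by simp_all

definition adjT :: "real^3^3 \<Rightarrow> real^3^3" where
  "adjT F = (\<chi> i j. F$(i+1)$(j+1) * F$(i+2)$(j+2) - F$(i+1)$(j+2) * F$(i+2)$(j+1))"

lemma adj1: "F ** transpose (adjT F) = det F *\<^sub>R mat 1"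
  unfolding vec_eq_iff forall_3
  by (simp add: matrix_matrix_mult_def transpose_def adjT_def sum_3 det_3 mat_def t3 algebra_simps)
lemma adj2: "transpose (adjT F) ** F = det F *\<^sub>R mat 1"
  unfolding vec_eq_iff forall_3
  by (simp add: matrix_matrix_mult_def transpose_def adjT_def sum_3 det_3 mat_def t3 algebra_simps)

lemma inv_unique:
  fixes A B :: "real^3^3"
  assumes "A ** B = mat 1" "B ** A = mat 1"
  shows "matrix_inv A = B"
proof -
  have ex: "\<exists>A'. A ** A' = mat 1 \<and> A' ** A = mat 1" using assms by blast
  define C where "C = matrix_inv A"
  have C: "A ** C = mat 1 \<and> C ** A = mat 1"
    unfolding C_def matrix_inv_def by (rule someI_ex[OF ex])
  have "C = C ** (A ** B)" using assms by simp
  also have "\<dots> = (C ** A) ** B" by (simp add: matrix_mul_assoc)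
  also have "\<dots> = B" using C by simp
  finally show ?thesis unfolding C_def .
qed

lemma mm_scaleR: "((c::real) *\<^sub>R (A::real^3^3)) ** (B::real^3^3) = c *\<^sub>R (A ** B)" "(A::real^3^3) ** (c *\<^sub>R (B::real^3^3)) = c *\<^sub>R (A ** B)"
  by (simp_all add: vec_eq_iff matrix_matrix_mult_def sum_distrib_left algebra_simps)

lemma cof_adjT:
  assumes "det F \<noteq> 0"
  shows "cof F = adjT F"
proof -
  have "matrix_inv F = (1 / det F) *\<^sub>R transpose (adjT F)"
    apply (rule inv_unique)
    using assms adj1[of F] adj2[of F]
    by (simp_all add: mm_scaleR)
  then show ?thesis unfolding cof_def using assms
    by (simp add: transpose_scalar)
qed

lemma polyf_entry: "polyf (\<lambda>F::real^'n^'m. F $ i $ j)"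
proof -
  have "(\<lambda>F::real^'n^'m. F $ i $ j) = (\<lambda>F. F \<bullet> axis i (axis j 1))"
    by (rule ext) (simp add: inner_axis)
  then show ?thesis by (simp add: plin)
qed

lemma polyf_sum: "finite A \<Longrightarrow> (\<And>a. a \<in> A \<Longrightarrow> polyf (f a)) \<Longrightarrow> polyf (\<lambda>x. \<Sum>a\<in>A. f a x)"
  by (induction A rule: finite_induct) (auto intro: polyf.intros)

lemma norm2_mat: "(norm (M::real^'n^'m))\<^sup>2 = (\<Sum>i\<in>UNIV. \<Sum>j\<in>UNIV. M$i$j * M$i$j)"
  by (simp add: power2_norm_eq_inner inner_vec_def)

lemma polyf_norm2:
  assumes "\<And>i j. polyf (\<lambda>x. M x $ i $ j)"
  shows "polyf (\<lambda>x. (norm (M x :: real^'n^'m))\<^sup>2)"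
  unfolding norm2_mat
  by (intro polyf_sum pmul assms; simp)

lemma polyf_matmul:
  assumes "\<And>i j. polyf (\<lambda>x. M x $ i $ j)"
  shows "polyf (\<lambda>x. (M x ** (G::real^'k^'n)) $ i $ j)"
  unfolding matrix_matrix_mult_def
  by (simp, intro polyf_sum pmul assms pconst; simp)

lemma polyf_diff: "polyf f \<Longrightarrow> polyf g \<Longrightarrow> polyf (\<lambda>x. f x - g x)"
proof -
  assume "polyf f" "polyf g"
  then have "polyf (\<lambda>x. f x + (-1) * g x)" by (intro padd pmul pconst)
  then show ?thesis by simp
qed

lemma C2_on_poly:
  assumes "polyf p" "open S" "\<And>x. x \<in> S \<Longrightarrow> f x = p x"
  shows "C2_on f S"
proof -
  obtain f' f'' where d: "\<forall>x. (p has_derivative blinfun_apply (f' x)) (at x)"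
    "\<forall>x. (f' has_derivative blinfun_apply (f'' x)) (at x)" "continuous_on UNIV f''"
    using polyf_C2[OF assms(1)] by blast
  have "\<forall>x\<in>S. (f has_derivative blinfun_apply (f' x)) (at x)"
    using d(1) assms(2,3) by (metis has_derivative_transform_within_open)
  then show ?thesis unfolding C2_on_def
    using d(2) continuous_on_subset[OF d(3)] by blast
qed

lemma polyf_det: "polyf (\<lambda>F::real^3^3. det F)"
  unfolding det_3
  by (intro polyf_diff padd pmul polyf_entry)

lemma open_GLp3: "open GLp3"
proof -
  have "open {F::real^3^3. (\<lambda>F. 0) F < det F}"
    by (rule open_Collect_less) (auto intro: polyf_cont polyf_det)
  then show ?thesis unfolding GLp3_def by simp
qed

lemma convex_norm2_lin:
  fixes L :: "'a::real_vector \<Rightarrow> 'b::real_normed_vector"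
  assumes "linear L"
  shows "convex_on UNIV (\<lambda>x. (norm (L x))\<^sup>2)"
proof (rule convex_onI)
  fix t :: real and x y :: 'a
  assume t: "0 < t" "t < 1"
  have "norm (L ((1 - t) *\<^sub>R x + t *\<^sub>R y)) = norm ((1 - t) *\<^sub>R L x + t *\<^sub>R L y)"
    using assms by (simp add: linear_add linear_scale)
  also have "\<dots> \<le> (1 - t) * norm (L x) + t * norm (L y)"
    using t by (metis (no_types, lifting) abs_of_nonneg less_eq_real_def norm_scaleR norm_triangle_ineq diff_ge_0_iff_ge)
  finally have "(norm (L ((1 - t) *\<^sub>R x + t *\<^sub>R y)))\<^sup>2 \<le> ((1 - t) * norm (L x) + t * norm (L y))\<^sup>2"
    by (simp add: power_mono)
  also have "\<dots> \<le> (1 - t) * (norm (L x))\<^sup>2 + t * (norm (L y))\<^sup>2"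
    using convex_onD[OF convex_power2, of t "norm (L x)" "norm (L y)"] t by simp
  finally show "(norm (L ((1 - t) *\<^sub>R x + t *\<^sub>R y)))\<^sup>2 \<le> (1 - t) * (norm (L x))\<^sup>2 + t * (norm (L y))\<^sup>2" .
qed simp


lemma row_dyad: "((H::real^3^3) ** dyad N N) $ i = (H$i \<bullet> N) *\<^sub>R N"
  by (auto simp: vec_eq_iff matrix_matrix_mult_def dyad_def inner_vec_def sum_distrib_left mult_ac)

lemma norm2_rows: "(norm (M::real^3^3))\<^sup>2 = (\<Sum>i\<in>UNIV. (norm (M$i))\<^sup>2)"
  by (simp add: power2_norm_eq_inner inner_vec_def)

lemma Q_eq:
  assumes "norm N = 1"
  shows "(norm (H::real^3^3))\<^sup>2 - (norm (H ** dyad N N))\<^sup>2 = (norm (H - H ** dyad N N))\<^sup>2"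
proof -
  have NN: "N \<bullet> N = 1" using assms by (metis norm_eq_sqrt_inner real_sqrt_eq_1_iff)
  have row: "(norm r)\<^sup>2 - (norm ((r \<bullet> N) *\<^sub>R N))\<^sup>2 = (norm (r - (r \<bullet> N) *\<^sub>R N))\<^sup>2" for r :: "real^3"
    by (simp only: power2_norm_eq_inner) (simp add: inner_diff_left inner_diff_right NN inner_commute algebra_simps power2_eq_square)
  show ?thesis
    unfolding norm2_rows sum_subtractf[symmetric] vector_minus_component row_dyad row ..
qed

lemma lin_L: "linear (\<lambda>H::real^3^3. H - H ** G)"
  by (rule linearI) (simp_all add: vec_eq_iff matrix_matrix_mult_def sum.distrib sum_distrib_left algebra_simps)

theorem corollary1:
  fixes N :: "real^3"
  assumes "norm N = 1"
  defines "G \<equiv> dyad N N"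
  defines "I4 \<equiv> (\<lambda>F. (norm F)\<^sup>2 - (norm (F ** G))\<^sup>2)"
  defines "I5 \<equiv> (\<lambda>F. (norm (cof F))\<^sup>2 - (norm (cof F ** G))\<^sup>2)"
  shows "C2_on I4 GLp3 \<and> C2_on I5 GLp3 \<and> polyconvex I4 \<and> polyconvex I5"
proof -
  define Q where "Q = (\<lambda>H::real^3^3. (norm H)\<^sup>2 - (norm (H ** G))\<^sup>2)"
  have Qe: "Q = (\<lambda>H. (norm (H - H ** G))\<^sup>2)"
    unfolding Q_def G_def using Q_eq[OF assms(1)] by (intro ext) simp
  have cQ: "convex_on UNIV Q"
    unfolding Qe by (rule convex_norm2_lin[OF lin_L])
  have cvx: "convex ((UNIV::(real^3^3) set) \<times> (UNIV::(real^3^3) set) \<times> ({0<..}::real set))"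
    by (intro convex_Times convex_UNIV convex_real_interval)
  have p1: "convex_on (UNIV \<times> UNIV \<times> {0<..}) (\<lambda>p::(real^3^3) \<times> (real^3^3) \<times> real. Q (fst p))"
    unfolding convex_on_def using cvx convex_onD[OF cQ] cQ
    by (auto simp: convex_on_def)
  have p2: "convex_on (UNIV \<times> UNIV \<times> {0<..}) (\<lambda>p::(real^3^3) \<times> (real^3^3) \<times> real. Q (fst (snd p)))"
    unfolding convex_on_def using cvx convex_onD[OF cQ] cQ
    by (auto simp: convex_on_def)
  have pc4: "polyconvex I4"
    unfolding polyconvex_def
    by (intro exI[of _ "\<lambda>p. Q (fst p)"] conjI p1) (simp add: I4_def Q_def)
  have pc5: "polyconvex I5"
    unfolding polyconvex_def
    by (intro exI[of _ "\<lambda>p. Q (fst (snd p))"] conjI p2) (simp add: I5_def Q_def)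
  have e: "\<And>i j. polyf (\<lambda>F::real^3^3. F $ i $ j)" by (rule polyf_entry)
  have c4: "C2_on I4 GLp3"
    by (rule C2_on_poly[OF _ open_GLp3, of I4]) (auto simp: I4_def intro!: polyf_diff polyf_norm2 polyf_matmul e)
  have ea: "\<And>i j. polyf (\<lambda>F. adjT F $ i $ j)"
    unfolding adjT_def by (simp, intro polyf_diff pmul e)
  have c5: "C2_on I5 GLp3"
    by (rule C2_on_poly[OF _ open_GLp3, of "\<lambda>F. (norm (adjT F))\<^sup>2 - (norm (adjT F ** G))\<^sup>2"])
      (auto simp: I5_def GLp3_def cof_adjT intro!: polyf_diff polyf_norm2 polyf_matmul ea)
  show ?thesis using c4 c5 pc4 pc5 by blast
qed

end
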